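(* Assume (A2) and (A3). For every $\delta>0$, on the event $\{20\bar\Delta_{\widehat g}\le\delta\}$, $$\widehat R_x(\delta)\le C\,\widehat R(\delta)+C\sqrt{\frac{\bar\Delta_{\widehat g}}n},$$ where $C>0$ is an absolute constant. (The statement holds for every realization of $X_1,\dots,X_n,Z_1,\dots,Z_n$.)
   Context: $\mathcal Z\subseteq\mathbb R^r$; $Z$ random in $\mathcal Z$ with law $\rho$; $K$ kernel on $\mathcal Z$ with RKHS $\mathcal H_K$, norm $\|\cdot\|_K$, $K_v=K(v,\cdot)$. (A2) $K$ continuous, symmetric, psd, $\sup K\le\kappa^2<\infty$. (A3) $L_Kf=\int K(z,\cdot)f(z)d\rho(z)=\sum_j\mu_j\langle\phi_j,f\rangle_\rho\phi_j$ with nonincreasing $\mu_j\ge0$, $\mu_1>0$, $\{\phi_j\}$ orthonormal basis of $\mathcal L^2(\rho)$. Given $Z_1,\dots,Z_n\in\mathcal Z$, $X_1,\dots,X_n\in\mathcal X$ and a measurable $\widehat g:\mathcal X\to\mathcal Z$, let $\widehat Z_i=\widehat g(X_i)$. $\mathbf K_x$ ($\mathbf K$) is the $n\times n$ matrix with entries $n^{-1}K(\widehat Z_i,\widehat Z_j)$ ($n^{-1}K(Z_i,Z_j)$), with eigenvalues $\widehat\mu_{x,1}\ge\dots\ge\widehat\mu_{x,n}$ ($\widehat\mu_1\ge\dots\ge\widehat\mu_n$); $\widehat R_x(\delta)=(\frac1n\sum_{j=1}^n\min\{\delta,\widehat\mu_{x,j}\})^{1/2}$, $\widehat R(\delta)=(\frac1n\sum_{j=1}^n\min\{\delta,\widehat\mu_j\})^{1/2}$.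 $\Delta_{i,\widehat g}=\|K_{Z_i}-K_{\widehat Z_i}\|_K^2$ and $\bar\Delta_{\widehat g}=\frac1n\sum_{i=1}^n\Delta_{i,\widehat g}$. *)

theory Defs
  imports "HOL-Analysis.Analysis" "Jordan_Normal_Form.Char_Poly"
begin

text \<open>Points of \<open>\<real>^r\<close> are represented as functions \<open>nat \<Rightarrow> real\<close> vanishing at
  indices \<open>\<ge> r\<close> (product topology = Euclidean topology on this subspace).\<close>

definition in_Rr :: "nat \<Rightarrow> (nat \<Rightarrow> real) \<Rightarrow> bool" where
  "in_Rr r z \<longleftrightarrow> (\<forall>i\<ge>r. z i = 0)"

definition kernel_A2 :: "'z::topological_space set \<Rightarrow> ('z \<Rightarrow> 'z \<Rightarrow> real) \<Rightarrow> real \<Rightarrow> bool" where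
  "kernel_A2 Zs K \<kappa> \<longleftrightarrow>
     continuous_on (Zs \<times> Zs) (\<lambda>(u, v). K u v) \<and>
     (\<forall>u\<in>Zs. \<forall>v\<in>Zs. K u v = K v u) \<and>
     (\<forall>(m::nat) (x::nat \<Rightarrow> 'z) (c::nat \<Rightarrow> real). (\<forall>i<m. x i \<in> Zs) \<longrightarrow>
        0 \<le> (\<Sum>i<m. \<Sum>j<m. c i * c j * K (x i) (x j))) \<and>
     (\<forall>u\<in>Zs. \<forall>v\<in>Zs. K u v \<le> \<kappa>\<^sup>2)"

text \<open>Squared RKHS distance \<open>\<parallel>K_u - K_v\<parallel>_K^2\<close>, written out via the reproducing property.\<close>
definition kdist_sq :: "('z \<Rightarrow> 'z \<Rightarrow> real) \<Rightarrow> 'z \<Rightarrow> 'z \<Rightarrow> real" where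
  "kdist_sq K u v = K u u - 2 * K u v + K v v"

definition gram :: "nat \<Rightarrow> ('z \<Rightarrow> 'z \<Rightarrow> real) \<Rightarrow> (nat \<Rightarrow> 'z) \<Rightarrow> real mat" where
  "gram n K Z = mat n n (\<lambda>(i, j). K (Z i) (Z j) / real n)"

text \<open>Eigenvalues (with multiplicity, nonincreasing) of a real matrix whose
  characteristic polynomial splits over the reals (true for symmetric matrices).\<close>
definition eigs :: "real mat \<Rightarrow> real list" where
  "eigs A = (SOME l. sorted (rev l) \<and> char_poly A = (\<Prod>a\<leftarrow>l. [:- a, 1:]))"

definition Rhat :: "nat \<Rightarrow> ('z \<Rightarrow> 'z \<Rightarrow> real) \<Rightarrow> (nat \<Rightarrow> 'z) \<Rightarrow> real \<Rightarrow> real" where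
  "Rhat n K Z \<delta> = sqrt ((1 / real n) * (\<Sum>j<n. min \<delta> (eigs (gram n K Z) ! j)))"

definition Delta_bar :: "nat \<Rightarrow> ('z \<Rightarrow> 'z \<Rightarrow> real) \<Rightarrow> (nat \<Rightarrow> 'z) \<Rightarrow> (nat \<Rightarrow> 'z) \<Rightarrow> real" where
  "Delta_bar n K Z Zh = (1 / real n) * (\<Sum>i<n. kdist_sq K (Z i) (Zh i))"

end

theory Submission
  imports Defs
begin


definition orth :: "nat \<Rightarrow> (nat \<Rightarrow> nat \<Rightarrow> real) \<Rightarrow> bool" where
  "orth n u \<longleftrightarrow> (\<forall>i<n. \<forall>j<n. (\<Sum>k<n. u i k * u j k) = (if i = j then 1 else 0)) \<and>
                 (\<forall>k<n. \<forall>l<n. (\<Sum>i<n. u i k * u i l) = (if k = l then 1 else 0))"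

lemma sum_delta1[simp]: "(\<Sum>b<(n::nat). f b * (if a = b then 1 else 0)) = (if a < n then f a else (0::real))"
proof -
  have "(\<Sum>b<n. f b * (if a = b then 1 else 0)) = (\<Sum>b<n. if a = b then f b else 0)"
    by (rule sum.cong) auto
  thus ?thesis by (simp only: sum.delta sum.delta' finite_lessThan lessThan_iff)
qed

lemma sum_delta2[simp]: "(\<Sum>b<(n::nat). f b * (if b = a then 1 else 0)) = (if a < n then f a else (0::real))"
proof -
  have "(\<Sum>b<n. f b * (if b = a then 1 else 0)) = (\<Sum>b<n. if b = a then f b else 0)"
    by (rule sum.cong) auto
  thus ?thesis by (simp only: sum.delta sum.delta' finite_lessThan lessThan_iff)
qed

lemma sum_swap3: "(\<Sum>k<(n::nat). \<Sum>a<n. \<Sum>b<n. f k a b) = (\<Sum>a<n. \<Sum>b<n. \<Sum>k<n. (f k a b::real))"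
proof -
  have "(\<Sum>k<n. \<Sum>a<n. \<Sum>b<n. f k a b) = (\<Sum>a<n. \<Sum>k<n. \<Sum>b<n. f k a b)"
    by (rule sum.swap)
  also have "\<dots> = (\<Sum>a<n. \<Sum>b<n. \<Sum>k<n. f k a b)"
    by (rule sum.cong[OF refl], rule sum.swap)
  finally show ?thesis .
qed

lemma prod_sums: "(\<Sum>a<(n::nat). f a) * (\<Sum>b<n. g b) = (\<Sum>a<n. \<Sum>b<n. (f a * g b::real))"
  by (simp add: sum_product)

lemma orth_mult:
  assumes P: "orth n P" and Q: "orth n Q"
  shows "orth n (\<lambda>i k. \<Sum>a<n. P i a * Q a k)"
proof -
  have 1: "(\<Sum>k<n. (\<Sum>a<n. P i a * Q a k) * (\<Sum>b<n. P j b * Q b k)) = (if i = j then 1 else 0)"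
    if "i < n" "j < n" for i j
  proof -
    have "(\<Sum>k<n. (\<Sum>a<n. P i a * Q a k) * (\<Sum>b<n. P j b * Q b k))
        = (\<Sum>k<n. \<Sum>a<n. \<Sum>b<n. (P i a * P j b) * (Q a k * Q b k))"
      by (simp add: prod_sums mult_ac)
    also have "\<dots> = (\<Sum>a<n. \<Sum>b<n. \<Sum>k<n. (P i a * P j b) * (Q a k * Q b k))"
      by (rule sum_swap3)
    also have "\<dots> = (\<Sum>a<n. \<Sum>b<n. (P i a * P j b) * (if a = b then 1 else 0))"
      using Q unfolding orth_def by (simp add: sum_distrib_left[symmetric])
    also have "\<dots> = (\<Sum>a<n. P i a * P j a)" by simp
    also have "\<dots> = (if i = j then 1 else 0)" using P that unfolding orth_def by simp
    finally show ?thesis .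
  qed
  have 2: "(\<Sum>i<n. (\<Sum>a<n. P i a * Q a k) * (\<Sum>b<n. P i b * Q b l)) = (if k = l then 1 else 0)"
    if "k < n" "l < n" for k l
  proof -
    have "(\<Sum>i<n. (\<Sum>a<n. P i a * Q a k) * (\<Sum>b<n. P i b * Q b l))
        = (\<Sum>i<n. \<Sum>a<n. \<Sum>b<n. (Q a k * Q b l) * (P i a * P i b))"
      by (simp add: prod_sums mult_ac)
    also have "\<dots> = (\<Sum>a<n. \<Sum>b<n. \<Sum>i<n. (Q a k * Q b l) * (P i a * P i b))"
      by (rule sum_swap3)
    also have "\<dots> = (\<Sum>a<n. \<Sum>b<n. (Q a k * Q b l) * (if a = b then 1 else 0))"
      using P unfolding orth_def by (simp add: sum_distrib_left[symmetric])
    also have "\<dots> = (\<Sum>a<n. Q a k * Q a l)" by simp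
    also have "\<dots> = (if k = l then 1 else 0)" using Q that unfolding orth_def by simp
    finally show ?thesis .
  qed
  show ?thesis unfolding orth_def using 1 2 by blast
qed

lemma orth_transpose: "orth n u \<Longrightarrow> orth n (\<lambda>i k. u k i)"
  unfolding orth_def by auto

lemma orth_id: "orth n (\<lambda>i j. if i = j then 1 else 0)"
  unfolding orth_def by auto

lemma householder:
  assumes v: "(\<Sum>i<Suc m. v i ^ 2) = 1"
  shows "\<exists>H. orth (Suc m) H \<and> (\<forall>i<Suc m. \<forall>j<Suc m. H i j = H j i) \<and> (\<forall>i<Suc m. H i m = v i)"
proof (cases "v m = 1")
  case True
  have "(\<Sum>i<m. v i ^ 2) = 0" using v True by simp
  hence "\<forall>i\<in>{..<m}. v i ^ 2 = 0" by (subst sum_nonneg_eq_0_iff[symmetric]) auto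
  hence "\<forall>i<m. v i = 0" by auto
  hence "\<forall>i<Suc m. (if i = m then 1 else 0) = v i" using True by (auto simp: less_Suc_eq)
  thus ?thesis using orth_id[of "Suc m"] by (intro exI[of _ "\<lambda>i j. if i = j then 1 else 0"]) auto
next
  case False
  define n where "n = Suc m"
  have "v m ^ 2 \<le> (\<Sum>i<Suc m. v i ^ 2)"
    by (rule member_le_sum) auto
  hence "v m ^ 2 \<le> 1" using v by simp
  hence "v m \<le> 1" by (simp add: abs_square_le_1)
  define c where "c = 1 - v m"
  have c: "c > 0" using False \<open>v m \<le> 1\<close> unfolding c_def by simp
  define w where "w i = v i - (if i = m then 1 else 0)" for i
  define H where "H i j = (if i = j then 1 else 0) - w i * w j / c" for i j
  have wm: "w m = - c" unfolding w_def c_def by simp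
  have ww: "(\<Sum>k<n. w k * w k) = 2 * c"
  proof -
    have "(\<Sum>k<n. w k * w k) = (\<Sum>k<n. v k ^ 2 - 2 * (v k * (if k = m then 1 else 0)) + (if k = m then 1 else 0) * (if k = m then 1 else 0))"
      unfolding w_def by (rule sum.cong) (auto simp: power2_eq_square algebra_simps)
    also have "\<dots> = 1 - 2 * v m + 1"
      using v unfolding n_def by (simp add: sum.distrib sum_subtractf sum_distrib_left[symmetric])
    finally show ?thesis unfolding c_def by simp
  qed
  have Hsym: "\<forall>i<n. \<forall>j<n. H i j = H j i" unfolding H_def by auto
  have Hort: "(\<Sum>k<n. H i k * H j k) = (if i = j then 1 else 0)" if "i < n" "j < n" for i j
  proof -
    have "(\<Sum>k<n. H i k * H j k) = (\<Sum>k<n. (if i = k then 1 else 0) * (if j = k then 1 else 0)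
        - (w j / c) * (w k * (if i = k then 1 else 0)) - (w i / c) * (w k * (if j = k then 1 else 0))
        + (w i * w j / c ^ 2) * (w k * w k))"
      unfolding H_def by (rule sum.cong) (auto simp: power2_eq_square algebra_simps)
    also have "\<dots> = (\<Sum>k<n. (if i = k then 1 else 0) * (if j = k then 1 else 0))
        - (w j / c) * (\<Sum>k<n. w k * (if i = k then 1 else 0)) - (w i / c) * (\<Sum>k<n. w k * (if j = k then 1 else 0))
        + (w i * w j / c ^ 2) * (\<Sum>k<n. w k * w k)"
      by (simp only: sum.distrib sum_subtractf sum_distrib_left)
    also have "\<dots> = (if i = j then 1 else 0) - w j * w i / c - w i * w j / c + (w i * w j / c ^ 2) * (2 * c)"
      using that by (simp add: ww)
    also have "\<dots> = (if i = j then 1 else 0)" using c by (simp add: power2_eq_square field_simps)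
    finally show ?thesis .
  qed
  have "orth n H" unfolding orth_def using Hort Hsym
    by (metis (no_types, lifting) sum.cong lessThan_iff)
  moreover have "\<forall>i<n. H i m = v i"
    unfolding H_def wm using c by (auto simp: w_def)
  ultimately show ?thesis using Hsym unfolding n_def by blast
qed

lemma unit_eig:
  fixes M :: "nat \<Rightarrow> nat \<Rightarrow> real" and x :: "nat \<Rightarrow> real" and n :: nat
  assumes "k < n" "x k \<noteq> 0" "\<forall>i<n. (\<Sum>j<n. M i j * x j) = e * x i"
  shows "\<exists>e v. (\<Sum>i<n. v i ^ 2) = 1 \<and> (\<forall>i<n. (\<Sum>j<n. M i j * v j) = e * v i)"
proof -
  define s where "s = (\<Sum>i<n. x i ^ 2)"
  have "x k ^ 2 \<le> s" unfolding s_def by (rule member_le_sum) (use assms in auto)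
  hence s: "s > 0" using assms by (smt (verit) zero_less_power2)
  define v where "v i = x i / sqrt s" for i
  have "(\<Sum>i<n. v i ^ 2) = (\<Sum>i<n. x i ^ 2) / s"
    unfolding v_def using s by (simp add: power_divide sum_divide_distrib)
  also have "\<dots> = 1" using s unfolding s_def by simp
  finally have 1: "(\<Sum>i<n. v i ^ 2) = 1" .
  have "\<forall>i<n. (\<Sum>j<n. M i j * v j) = e * v i"
  proof (intro allI impI)
    fix i assume "i < n"
    have "(\<Sum>j<n. M i j * v j) = (\<Sum>j<n. M i j * x j) / sqrt s"
      unfolding v_def sum_divide_distrib by (rule sum.cong) auto
    also have "\<dots> = e * v i" using assms(3) \<open>i < n\<close> unfolding v_def by simp
    finally show "(\<Sum>j<n. M i j * v j) = e * v i" .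
  qed
  with 1 show ?thesis by blast
qed

lemma real_eig:
  fixes M :: "nat \<Rightarrow> nat \<Rightarrow> real"
  assumes n: "0 < n" and sym: "\<forall>i<n. \<forall>j<n. M i j = M j i"
  shows "\<exists>e v. (\<Sum>i<n. v i ^ 2) = 1 \<and> (\<forall>i<n. (\<Sum>j<n. M i j * v j) = e * v i)"
proof -
  define A where "A = mat n n (\<lambda>(i,j). complex_of_real (M i j))"
  have A: "A \<in> carrier_mat n n" unfolding A_def by simp
  obtain as where cp: "char_poly A = (\<Prod>a\<leftarrow>as. [:-a,1:])" and len: "length as = n"
    using char_poly_factorized[OF A] by blast
  define e where "e = hd as"
  have "e \<in> set as" using len n unfolding e_def by (cases as) auto
  hence "poly (char_poly A) e = 0" unfolding cp by (rule linear_poly_root)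
  hence "eigenvalue A e" using eigenvalue_root_char_poly[OF A] by simp
  then obtain v where ev: "eigenvector A v e" unfolding eigenvalue_def by blast
  hence v: "v \<in> carrier_vec n" "v \<noteq> 0\<^sub>v n" "A *\<^sub>v v = e \<cdot>\<^sub>v v" using A unfolding eigenvector_def by auto
  have comp: "(\<Sum>j<n. complex_of_real (M i j) * v $ j) = e * v $ i" if "i < n" for i
  proof -
    have "(A *\<^sub>v v) $ i = e * v $ i" using v(3) that v(1) by simp
    moreover have "(A *\<^sub>v v) $ i = (\<Sum>j<n. complex_of_real (M i j) * v $ j)"
      using that v(1) unfolding A_def by (simp add: scalar_prod_def atLeast0LessThan)
    ultimately show ?thesis by simp
  qed
  obtain k where k: "k < n" "v $ k \<noteq> 0"
  proof -
    have "\<exists>k<n. v $ k \<noteq> 0"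
    proof (rule ccontr)
      assume "\<not> ?thesis"
      hence "v = 0\<^sub>v n" using v(1) by (intro eq_vecI) auto
      thus False using v(2) by simp
    qed
    thus ?thesis using that by blast
  qed
  define N where "N = (\<Sum>i<n. cmod (v $ i) ^ 2)"
  have "cmod (v $ k) ^ 2 \<le> N" unfolding N_def by (rule member_le_sum) (use k in auto)
  hence Npos: "N > 0" using k by (smt (verit) zero_less_norm_iff zero_less_power2)
  define S where "S = (\<Sum>i<n. cnj (v $ i) * (\<Sum>j<n. complex_of_real (M i j) * v $ j))"
  have S1: "S = e * complex_of_real N"
  proof -
    have "S = (\<Sum>i<n. e * (v $ i * cnj (v $ i)))" unfolding S_def
      by (rule sum.cong) (auto simp: comp)
    also have "\<dots> = (\<Sum>i<n. e * complex_of_real (cmod (v $ i) ^ 2))"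
      by (intro sum.cong refl) (metis complex_norm_square)
    also have "\<dots> = e * complex_of_real (\<Sum>i<n. cmod (v $ i) ^ 2)"
      by (simp only: sum_distrib_left of_real_sum)
    finally show ?thesis unfolding N_def by simp
  qed
  have S2: "cnj S = S"
  proof -
    have "cnj S = (\<Sum>i<n. \<Sum>j<n. complex_of_real (M i j) * (v $ i * cnj (v $ j)))"
      unfolding S_def by (simp add: sum_distrib_left mult_ac)
    also have "\<dots> = (\<Sum>j<n. \<Sum>i<n. complex_of_real (M i j) * (v $ i * cnj (v $ j)))"
      by (rule sum.swap)
    also have "\<dots> = (\<Sum>j<n. \<Sum>i<n. complex_of_real (M j i) * (cnj (v $ j) * v $ i))"
      using sym by (intro sum.cong refl) (auto simp: mult_ac)
    also have "\<dots> = S" unfolding S_def by (simp add: sum_distrib_left mult_ac)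
    finally show ?thesis .
  qed
  have "cnj e * complex_of_real N = e * complex_of_real N"
    using S1 S2 by (metis complex_cnj_complex_of_real complex_cnj_mult)
  hence "cnj e = e" using Npos by simp
  hence Ie: "Im e = 0" by (metis Reals_cnj_iff complex_is_Real_iff)
  have re: "(\<Sum>j<n. M i j * Re (v $ j)) = Re e * Re (v $ i)" if "i < n" for i
  proof -
    have "Re (\<Sum>j<n. complex_of_real (M i j) * v $ j) = Re (e * v $ i)" using comp[OF that] by simp
    thus ?thesis using Ie by (simp add: Re_sum)
  qed
  have im: "(\<Sum>j<n. M i j * Im (v $ j)) = Re e * Im (v $ i)" if "i < n" for i
  proof -
    have "Im (\<Sum>j<n. complex_of_real (M i j) * v $ j) = Im (e * v $ i)" using comp[OF that] by simp
    thus ?thesis using Ie by (simp add: Im_sum)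
  qed
  show ?thesis
  proof (cases "Re (v $ k) = 0")
    case False
    show ?thesis by (rule unit_eig[of k n "\<lambda>j. Re (v $ j)" M "Re e"]) (use k False re in auto)
  next
    case True
    hence "Im (v $ k) \<noteq> 0" using k(2) complex_eq_iff by force
    show ?thesis by (rule unit_eig[of k n "\<lambda>j. Im (v $ j)" M "Re e"]) (use k \<open>Im (v $ k) \<noteq> 0\<close> im in auto)
  qed
qed

definition mm :: "nat \<Rightarrow> (nat \<Rightarrow> nat \<Rightarrow> real) \<Rightarrow> (nat \<Rightarrow> nat \<Rightarrow> real) \<Rightarrow> nat \<Rightarrow> nat \<Rightarrow> real" where
  "mm n X Y = (\<lambda>i j. \<Sum>k<n. X i k * Y k j)"
definition tp :: "(nat \<Rightarrow> nat \<Rightarrow> real) \<Rightarrow> nat \<Rightarrow> nat \<Rightarrow> real" where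
  "tp X = (\<lambda>i j. X j i)"
definition eqn :: "nat \<Rightarrow> (nat \<Rightarrow> nat \<Rightarrow> real) \<Rightarrow> (nat \<Rightarrow> nat \<Rightarrow> real) \<Rightarrow> bool" where
  "eqn n X Y \<longleftrightarrow> (\<forall>i<n. \<forall>j<n. X i j = Y i j)"
definition Idm :: "nat \<Rightarrow> nat \<Rightarrow> real" where
  "Idm = (\<lambda>i j. if i = j then 1 else 0)"
definition dg :: "(nat \<Rightarrow> real) \<Rightarrow> nat \<Rightarrow> nat \<Rightarrow> real" where
  "dg d = (\<lambda>i j. if i = j then d i else 0)"

lemma mm_assoc: "mm n (mm n X Y) Z = mm n X (mm n Y Z)"
proof (intro ext)
  fix i j
  have "mm n (mm n X Y) Z i j = (\<Sum>k<n. \<Sum>l<n. X i l * (Y l k * Z k j))"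
    unfolding mm_def by (simp add: sum_distrib_right sum_distrib_left mult_ac)
  also have "\<dots> = (\<Sum>l<n. \<Sum>k<n. X i l * (Y l k * Z k j))" by (rule sum.swap)
  also have "\<dots> = mm n X (mm n Y Z) i j" unfolding mm_def by (simp add: sum_distrib_left)
  finally show "mm n (mm n X Y) Z i j = mm n X (mm n Y Z) i j" .
qed

lemma tp_mm: "tp (mm n X Y) = mm n (tp Y) (tp X)"
  unfolding tp_def mm_def by (auto simp: mult_ac)

lemma tp_tp[simp]: "tp (tp X) = X" unfolding tp_def by simp

lemma eqn_refl[simp]: "eqn n X X" unfolding eqn_def by simp
lemma eqn_sym: "eqn n X Y \<Longrightarrow> eqn n Y X" unfolding eqn_def by simp
lemma eqn_trans: "eqn n X Y \<Longrightarrow> eqn n Y Z \<Longrightarrow> eqn n X Z" unfolding eqn_def by simp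

lemma mm_cong: "eqn n X X' \<Longrightarrow> eqn n Y Y' \<Longrightarrow> eqn n (mm n X Y) (mm n X' Y')"
  unfolding eqn_def mm_def by (auto intro!: sum.cong)

lemma tp_cong: "eqn n X Y \<Longrightarrow> eqn n (tp X) (tp Y)"
  unfolding eqn_def tp_def by auto

lemma mm_Id_left: "eqn n (mm n Idm X) X"
  unfolding eqn_def mm_def Idm_def
proof (intro allI impI)
  fix i j assume "i < n" "j < n"
  have "(\<Sum>k<n. (if i = k then 1 else 0) * X k j) = (\<Sum>k<n. X k j * (if i = k then 1 else 0))"
    by (simp add: mult.commute)
  thus "(\<Sum>k<n. (if i = k then 1 else 0) * X k j) = X i j" using \<open>i < n\<close> by simp
qed

lemma mm_Id_right: "eqn n (mm n X Idm) X"
  unfolding eqn_def mm_def Idm_def by simp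

lemma orth_eqn: "orth n u \<longleftrightarrow> eqn n (mm n u (tp u)) Idm \<and> eqn n (mm n (tp u) u) Idm"
  unfolding orth_def eqn_def mm_def tp_def Idm_def by simp

lemma udu_entry: "mm n (mm n u (dg d)) (tp u) i j = (\<Sum>k<n. u i k * d k * u j k)"
proof -
  have "mm n u (dg d) i k = (if k < n then u i k * d k else 0)" for k
  proof -
    have "mm n u (dg d) i k = (\<Sum>ka<n. if ka = k then u i ka * d ka else 0)"
      unfolding mm_def dg_def by (rule sum.cong) auto
    thus ?thesis by (simp only: sum.delta finite_lessThan lessThan_iff)
  qed
  thus ?thesis unfolding mm_def tp_def by (intro sum.cong) auto
qed

definition spec :: "nat \<Rightarrow> (nat \<Rightarrow> nat \<Rightarrow> real) \<Rightarrow> (nat \<Rightarrow> nat \<Rightarrow> real) \<Rightarrow> (nat \<Rightarrow> real) \<Rightarrow> bool" where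
  "spec n M u d \<longleftrightarrow> orth n u \<and> eqn n M (mm n (mm n u (dg d)) (tp u))"

lemma conj_back:
  assumes "orth n H"
  shows "eqn n (mm n (mm n H (mm n (mm n (tp H) M) H)) (tp H)) M"
proof -
  have "mm n (mm n H (mm n (mm n (tp H) M) H)) (tp H) = mm n (mm n (mm n H (tp H)) M) (mm n H (tp H))"
    by (simp add: mm_assoc)
  moreover have "eqn n (mm n (mm n (mm n H (tp H)) M) (mm n H (tp H))) (mm n (mm n Idm M) Idm)"
    using assms unfolding orth_eqn by (intro mm_cong) auto
  moreover have "eqn n (mm n (mm n Idm M) Idm) M"
    by (rule eqn_trans[OF mm_Id_right mm_Id_left])
  ultimately show ?thesis by (metis eqn_trans)
qed

lemma spectral:
  fixes M :: "nat \<Rightarrow> nat \<Rightarrow> real"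
  assumes "\<forall>i<n. \<forall>j<n. M i j = M j i"
  shows "\<exists>u d. spec n M u d"
  using assms
proof (induction n arbitrary: M)
  case 0
  show ?case unfolding spec_def orth_def eqn_def by simp
next
  case (Suc m)
  define n where "n = Suc m"
  have sym: "\<forall>i<n. \<forall>j<n. M i j = M j i" using Suc.prems n_def by simp
  obtain e v where v1: "(\<Sum>i<n. v i ^ 2) = 1" and ev: "\<forall>i<n. (\<Sum>j<n. M i j * v j) = e * v i"
    using real_eig[of n M] sym unfolding n_def by auto
  obtain H where H: "orth n H" and Hsym: "\<forall>i<n. \<forall>j<n. H i j = H j i" and Hm: "\<forall>i<n. H i m = v i"
    using householder[of v m] v1 unfolding n_def by auto
  define A' where "A' = mm n (mm n (tp H) M) H"
  have A'm: "A' i m = (if i = m then e else 0)" if "i < n" for i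
  proof -
    have "mm n M H a m = e * H a m" if "a < n" for a
      using ev Hm that unfolding mm_def n_def by (auto intro!: sum.cong)
    hence "A' i m = (\<Sum>a<n. e * (H a i * H a m))"
      unfolding A'_def mm_assoc by (subst mm_def) (auto simp: tp_def intro!: sum.cong)
    also have "\<dots> = e * (if i = m then 1 else 0)"
      using H that unfolding orth_def n_def by (simp add: sum_distrib_left[symmetric])
    finally show ?thesis by simp
  qed
  have A'sym: "eqn n (tp A') A'"
  proof -
    have "tp A' = mm n (tp H) (mm n (tp M) H)" unfolding A'_def tp_mm by (simp add: mm_assoc)
    moreover have "eqn n (tp M) M" using sym unfolding eqn_def tp_def by auto
    ultimately show ?thesis unfolding A'_def mm_assoc by (metis eqn_refl mm_cong)
  qed
  have A'm2: "A' m j = (if j = m then e else 0)" if "j < n" for j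
    using A'sym A'm[OF that] that unfolding eqn_def tp_def n_def by (metis lessI)
  have "\<forall>i<m. \<forall>j<m. A' i j = A' j i" using A'sym unfolding eqn_def tp_def n_def by auto
  then obtain u' d' where sp: "spec m A' u' d'" using Suc.IH by blast
  have u'o: "orth m u'" and A'e: "\<forall>i<m. \<forall>j<m. A' i j = (\<Sum>k<m. u' i k * d' k * u' j k)"
    using sp unfolding spec_def eqn_def udu_entry by auto
  define u'' where "u'' i k = (if i < m \<and> k < m then u' i k else if i = m \<and> k = m then 1 else 0)" for i k
  define d'' where "d'' k = (if k < m then d' k else e)" for k
  have u''o: "orth n u''"
    using u'o unfolding orth_def n_def u''_def by (auto simp: less_Suc_eq)
  have "eqn n A' (mm n (mm n u'' (dg d'')) (tp u''))"
    unfolding eqn_def udu_entry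
  proof (intro allI impI)
    fix i j assume i: "i < n" and j: "j < n"
    show "A' i j = (\<Sum>k<n. u'' i k * d'' k * u'' j k)"
    proof (cases "i = m \<or> j = m")
      case True
      thus ?thesis using A'm A'm2 i j unfolding n_def u''_def d''_def by (auto simp: less_Suc_eq)
    next
      case False
      hence "i < m" "j < m" using i j unfolding n_def by auto
      thus ?thesis using A'e unfolding n_def u''_def d''_def by auto
    qed
  qed
  hence "eqn n (mm n (mm n H A') (tp H)) (mm n (mm n H (mm n (mm n u'' (dg d'')) (tp u''))) (tp H))"
    by (intro mm_cong) auto
  moreover have "mm n (mm n H (mm n (mm n u'' (dg d'')) (tp u''))) (tp H)
     = mm n (mm n (mm n H u'') (dg d'')) (tp (mm n H u''))"
    by (simp add: mm_assoc tp_mm)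
  moreover have "eqn n (mm n (mm n H A') (tp H)) M" using conj_back[OF H] unfolding A'_def .
  ultimately have "eqn n M (mm n (mm n (mm n H u'') (dg d'')) (tp (mm n H u'')))"
    by (metis eqn_sym eqn_trans)
  moreover have "orth n (mm n H u'')" unfolding mm_def by (rule orth_mult[OF H u''o])
  ultimately show ?case unfolding spec_def n_def by blast
qed

lemma prod_lin_mset: "mset xs = mset ys \<Longrightarrow> (\<Prod>a\<leftarrow>xs. g a) = (\<Prod>a\<leftarrow>ys. (g a :: 'b :: comm_monoid_mult))"
  by (metis mset_map prod_mset_prod_list)

lemma lin_factors_unique:
  fixes xs ys :: "real list"
  assumes "(\<Prod>a\<leftarrow>xs. [:-a,1:]) = (\<Prod>a\<leftarrow>ys. [:-a,1:])"
  shows "mset xs = mset ys"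
  using assms
proof (induction xs arbitrary: ys)
  case Nil
  have "length ys = 0" using degree_linear_factors[of uminus ys] Nil by simp
  thus ?case by simp
next
  case (Cons x xs)
  have "poly (\<Prod>a\<leftarrow>ys. [:-a,1:]) x = 0" using Cons.prems[symmetric] by simp
  hence "0 \<in> (\<lambda>a. x - a) ` set ys" by (simp add: poly_prod_list prod_list_zero_iff o_def)
  hence "x \<in> set ys" by auto
  hence ms: "mset ys = mset (x # remove1 x ys)" by simp
  have eq: "[:-x,1:] * (\<Prod>a\<leftarrow>xs. [:-a,1:]) = [:-x,1:] * (\<Prod>a\<leftarrow>remove1 x ys. [:-a,1:])"
    using Cons.prems prod_lin_mset[OF ms, of "\<lambda>a. [:-a,1:]"] by simp
  have nz: "[:-x,1:] \<noteq> (0 :: real poly)" by simp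
  have "(\<Prod>a\<leftarrow>xs. [:-a,1:]) = (\<Prod>a\<leftarrow>remove1 x ys. [:-a,1:])"
    by (rule iffD1[OF mult_left_cancel[OF nz] eq])
  hence "mset xs = mset (remove1 x ys)" by (rule Cons.IH)
  hence "mset (x # xs) = mset (x # remove1 x ys)" by simp
  thus ?case using ms by (rule trans[OF _ sym])
qed

lemma mat_mm: "mat n n (\<lambda>(i,j). X i j) * mat n n (\<lambda>(i,j). Y i j) = mat n n (\<lambda>(i,j). mm n X Y i j)"
  by (rule eq_matI) (auto simp: mm_def scalar_prod_def atLeast0LessThan)

lemma mat_tp: "transpose_mat (mat n n (\<lambda>(i,j). X i j)) = mat n n (\<lambda>(i,j). tp X i j)"
  by (rule eq_matI) (auto simp: tp_def)

lemma mat_eqn: "eqn n X Y \<Longrightarrow> mat n n (\<lambda>(i,j). X i j) = mat n n (\<lambda>(i,j). Y i j)"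
  unfolding eqn_def by (rule eq_matI) auto

lemma mat_Id: "1\<^sub>m n = mat n n (\<lambda>(i,j). Idm i j)"
  by (rule eq_matI) (auto simp: Idm_def)

lemma eigs_sum:
  fixes M :: "nat \<Rightarrow> nat \<Rightarrow> real"
  assumes sp: "spec n M u d"
  shows "(\<Sum>j<n. f (eigs (mat n n (\<lambda>(i,j). M i j)) ! j)) = (\<Sum>k<n. f (d k))"
proof -
  define A where "A = mat n n (\<lambda>(i,j). M i j)"
  define U where "U = mat n n (\<lambda>(i,j). u i j)"
  define D where "D = mat n n (\<lambda>(i,j). dg d i j)"
  have o: "orth n u" and Me: "eqn n M (mm n (mm n u (dg d)) (tp u))" using sp unfolding spec_def by auto
  have UUt: "U * transpose_mat U = 1\<^sub>m n" "transpose_mat U * U = 1\<^sub>m n"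
    using o unfolding orth_eqn U_def mat_tp mat_mm mat_Id by (auto intro: mat_eqn)
  have AUDU: "A = U * D * transpose_mat U"
    unfolding A_def U_def D_def mat_tp mat_mm using Me by (rule mat_eqn)
  have "similar_mat_wit A D U (transpose_mat U)"
    by (rule similar_mat_witI[OF UUt AUDU]) (auto simp: A_def D_def U_def)
  hence "similar_mat A D" unfolding similar_mat_def by blast
  hence "char_poly A = char_poly D" by (rule char_poly_similar)
  also have "\<dots> = (\<Prod>a\<leftarrow>diag_mat D. [:-a,1:])"
    by (rule char_poly_upper_triangular[of _ n]) (auto simp: D_def upper_triangular_def dg_def)
  also have "diag_mat D = map d [0..<n]" unfolding diag_mat_def D_def by (auto simp: dg_def)
  finally have cpA: "char_poly A = (\<Prod>a\<leftarrow>map d [0..<n]. [:-a,1:])" .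
  define ds where "ds = map d [0..<n]"
  have ex: "\<exists>l. sorted (rev l) \<and> char_poly A = (\<Prod>a\<leftarrow>l. [:-a,1:])"
  proof (intro exI conjI)
    show "sorted (rev (rev (sort ds)))" by simp
    show "char_poly A = (\<Prod>a\<leftarrow>rev (sort ds). [:-a,1:])"
      unfolding cpA ds_def[symmetric] by (rule prod_lin_mset) simp
  qed
  define L where "L = eigs A"
  have "char_poly A = (\<Prod>a\<leftarrow>L. [:-a,1:])"
    using someI_ex[OF ex] unfolding L_def eigs_def by blast
  hence mL: "mset L = mset ds" using cpA unfolding ds_def by (intro lin_factors_unique) simp
  hence lenL: "length L = n" unfolding ds_def by (metis length_map length_upt minus_nat.diff_0 size_mset)
  have "(\<Sum>j<n. f (L ! j)) = sum_list (map f L)"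
    unfolding sum_list_sum_nth using lenL by (simp add: atLeast0LessThan)
  also have "\<dots> = sum_list (map f ds)" using mL by (metis mset_map sum_mset_sum_list)
  also have "\<dots> = (\<Sum>k<n. f (d k))" unfolding ds_def
    by (simp add: sum_list_sum_nth atLeast0LessThan)
  finally show ?thesis unfolding L_def A_def .
qed



lemma sum_split_add: "(\<Sum>p<(n::nat)+m. f p) = (\<Sum>p<n. f p) + (\<Sum>p<m. (f (n + p) :: real))"
  by (induction m) (auto simp: add.commute)

definition Qf :: "nat \<Rightarrow> (nat \<Rightarrow> real) \<Rightarrow> (nat \<Rightarrow> nat \<Rightarrow> real) \<Rightarrow> real" where
  "Qf n c F = (\<Sum>i<n. \<Sum>j<n. c i * c j * F i j)"

lemma Qf_lin: "a * Qf n c F + b * Qf n c F' = Qf n c (\<lambda>i j. a * F i j + b * F' i j)"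
  unfolding Qf_def by (simp add: sum_distrib_left sum.distrib[symmetric] algebra_simps)

lemma Qf_cong: "(\<And>i j. i < n \<Longrightarrow> j < n \<Longrightarrow> F i j = F' i j) \<Longrightarrow> Qf n c F = Qf n c F'"
  unfolding Qf_def by (auto intro!: sum.cong)

lemma quad_spec:
  assumes "spec n M u d"
  shows "(\<Sum>i<n. \<Sum>j<n. c i * M i j * c j) = (\<Sum>k<n. d k * (\<Sum>i<n. c i * u i k)^2)"
proof -
  have M: "\<forall>i<n. \<forall>j<n. M i j = (\<Sum>k<n. u i k * d k * u j k)"
    using assms unfolding spec_def eqn_def udu_entry by auto
  have "(\<Sum>i<n. \<Sum>j<n. c i * M i j * c j) = (\<Sum>i<n. \<Sum>j<n. \<Sum>k<n. d k * ((c i * u i k) * (c j * u j k)))"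
    using M by (intro sum.cong refl) (auto simp: sum_distrib_left sum_distrib_right mult_ac)
  also have "\<dots> = (\<Sum>k<n. \<Sum>i<n. \<Sum>j<n. d k * ((c i * u i k) * (c j * u j k)))"
    by (rule sum_swap3[symmetric])
  also have "\<dots> = (\<Sum>k<n. d k * ((\<Sum>i<n. c i * u i k) * (\<Sum>j<n. c j * u j k)))"
    by (simp only: prod_sums, simp only: sum_distrib_left)
  also have "\<dots> = (\<Sum>k<n. d k * (\<Sum>i<n. c i * u i k)^2)"
    by (simp add: power2_eq_square)
  finally show ?thesis .
qed

lemma psd2:
  fixes Z Zh :: "nat \<Rightarrow> 'z::topological_space" and n :: nat
  assumes A2: "kernel_A2 Zs K \<kappa>" and ZZ: "\<forall>i<n. Z i \<in> Zs \<and> Zh i \<in> Zs"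
  shows "0 \<le> (\<Sum>i<n. \<Sum>j<n. \<alpha> i * \<alpha> j * K (Z i) (Z j) + \<alpha> i * \<beta> j * K (Z i) (Zh j)
                 + \<beta> i * \<alpha> j * K (Zh i) (Z j) + \<beta> i * \<beta> j * K (Zh i) (Zh j))"
proof -
  define x where "x p = (if p < n then Z p else Zh (p - n))" for p
  define c where "c p = (if p < n then \<alpha> p else \<beta> (p - n))" for p
  have "\<forall>p<n+n. x p \<in> Zs" using ZZ unfolding x_def by auto
  hence "0 \<le> (\<Sum>p<n+n. \<Sum>q<n+n. c p * c q * K (x p) (x q))"
    using A2 unfolding kernel_A2_def by blast
  also have "\<dots> = (\<Sum>i<n. \<Sum>j<n. \<alpha> i * \<alpha> j * K (Z i) (Z j) + \<alpha> i * \<beta> j * K (Z i) (Zh j)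
                 + \<beta> i * \<alpha> j * K (Zh i) (Z j) + \<beta> i * \<beta> j * K (Zh i) (Zh j))"
    unfolding sum_split_add by (simp add: x_def c_def sum.distrib)
  finally show ?thesis .
qed

lemma Qf_lin4: "Qf n c (\<lambda>i j. x1 * F1 i j + x2 * F2 i j + x3 * F3 i j + x4 * F4 i j)
   = x1 * Qf n c F1 + x2 * Qf n c F2 + x3 * Qf n c F3 + x4 * Qf n c F4"
  unfolding Qf_def by (simp add: sum.distrib sum_distrib_left algebra_simps)

lemma min_comb:
  fixes p q :: real
  assumes "0 \<le> p" "0 \<le> q" "p + q = 1"
  shows "min d x \<le> d * p + x * q"
proof -
  have "min d x = min d x * p + min d x * q" using assms(3) by (metis distrib_left mult.commute mult_1)
  also have "\<dots> \<le> d * p + x * q"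
    by (intro add_mono mult_right_mono) (use assms in auto)
  finally show ?thesis .
qed

lemma main_bound:
  fixes K :: "'z::topological_space \<Rightarrow> 'z \<Rightarrow> real" and Z Zh :: "nat \<Rightarrow> 'z" and n :: nat
  assumes A2: "kernel_A2 Zs K \<kappa>" and n: "0 < n" and ZZ: "\<forall>i<n. Z i \<in> Zs \<and> Zh i \<in> Zs"
    and \<delta>: "0 < \<delta>"
  shows "Rhat n K Zh \<delta> \<le> 2 * Rhat n K Z \<delta> + 2 * sqrt (Delta_bar n K Z Zh / real n)"
proof -
  have symK: "\<forall>u\<in>Zs. \<forall>v\<in>Zs. K u v = K v u" using A2 unfolding kernel_A2_def by blast
  have psd: "\<forall>(m::nat) (x::nat \<Rightarrow> 'z) (c::nat \<Rightarrow> real). (\<forall>i<m. x i \<in> Zs) \<longrightarrow> 0 \<le> (\<Sum>i<m. \<Sum>j<m. c i * c j * K (x i) (x j))"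
    using A2 unfolding kernel_A2_def by blast
  define Kzz where "Kzz i j = K (Z i) (Z j)" for i j
  define Kzh where "Kzh i j = K (Z i) (Zh j)" for i j
  define Khz where "Khz i j = K (Zh i) (Z j)" for i j
  define Khh where "Khh i j = K (Zh i) (Zh j)" for i j
  define Hm where "Hm i j = Kzz i j / real n" for i j
  define Gm where "Gm i j = Khh i j / real n" for i j
  have Hsym: "\<forall>i<n. \<forall>j<n. Hm i j = Hm j i" using symK ZZ unfolding Hm_def Kzz_def by auto
  have Gsym: "\<forall>i<n. \<forall>j<n. Gm i j = Gm j i" using symK ZZ unfolding Gm_def Khh_def by auto
  obtain u b where spH: "spec n Hm u b" using spectral Hsym by blast
  obtain w a where spG: "spec n Gm w a" using spectral Gsym by blast
  have uo: "orth n u" and wo: "orth n w" using spH spG unfolding spec_def by auto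
  have gramZ: "gram n K Z = mat n n (\<lambda>(i,j). Hm i j)" unfolding gram_def Hm_def Kzz_def by simp
  have gramZh: "gram n K Zh = mat n n (\<lambda>(i,j). Gm i j)" unfolding gram_def Gm_def Khh_def by simp
  define Sa where "Sa = (\<Sum>k<n. min \<delta> (a k))"
  define Sb where "Sb = (\<Sum>k<n. min \<delta> (b k))"
  have RZ: "Rhat n K Z \<delta> = sqrt (1 / real n * Sb)"
    unfolding Rhat_def gramZ Sb_def using eigs_sum[OF spH, of "min \<delta>"] by simp
  have RZh: "Rhat n K Zh \<delta> = sqrt (1 / real n * Sa)"
    unfolding Rhat_def gramZh Sa_def using eigs_sum[OF spG, of "min \<delta>"] by simp
  define c where "c k i = u i k" for k i
  define qzz where "qzz k = Qf n (c k) Kzz" for k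
  define qzh where "qzh k = Qf n (c k) Kzh" for k
  define qhz where "qhz k = Qf n (c k) Khz" for k
  define qhh where "qhh k = Qf n (c k) Khh" for k
  define D where "D i j = Kzz i j - Kzh i j - Khz i j + Khh i j" for i j
  define qD where "qD k = (1 / real n) * Qf n (c k) D" for k
  have qD_eq: "qD k = (1 / real n) * (qzz k - qzh k - qhz k + qhh k)" for k
  proof -
    have "Qf n (c k) D = Qf n (c k) (\<lambda>i j. 1 * Kzz i j + (-1) * Kzh i j + (-1) * Khz i j + 1 * Khh i j)"
      by (rule Qf_cong) (simp add: D_def)
    thus ?thesis unfolding qD_def Qf_lin4 qzz_def qzh_def qhz_def qhh_def by simp
  qed
  have psdA: "0 \<le> 4 * qzz k - 2 * qzh k - 2 * qhz k + qhh k" for k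
  proof -
    have "0 \<le> (\<Sum>i<n. \<Sum>j<n. (2 * c k i) * (2 * c k j) * K (Z i) (Z j) + (2 * c k i) * (- c k j) * K (Z i) (Zh j)
                 + (- c k i) * (2 * c k j) * K (Zh i) (Z j) + (- c k i) * (- c k j) * K (Zh i) (Zh j))"
      by (rule psd2[OF A2 ZZ])
    also have "\<dots> = Qf n (c k) (\<lambda>i j. 4 * Kzz i j + (-2) * Kzh i j + (-2) * Khz i j + 1 * Khh i j)"
      unfolding Qf_def Kzz_def Kzh_def Khz_def Khh_def by (intro sum.cong refl) (simp add: algebra_simps)
    finally show ?thesis unfolding Qf_lin4 qzz_def qzh_def qhz_def qhh_def by simp
  qed
  have psdB: "0 \<le> qzz k - qzh k - qhz k + qhh k" for k
  proof -
    have "0 \<le> (\<Sum>i<n. \<Sum>j<n. (- c k i) * (- c k j) * K (Z i) (Z j) + (- c k i) * (c k j) * K (Z i) (Zh j)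
                 + (c k i) * (- c k j) * K (Zh i) (Z j) + (c k i) * (c k j) * K (Zh i) (Zh j))"
      by (rule psd2[OF A2 ZZ])
    also have "\<dots> = Qf n (c k) (\<lambda>i j. 1 * Kzz i j + (-1) * Kzh i j + (-1) * Khz i j + 1 * Khh i j)"
      unfolding Qf_def Kzz_def Kzh_def Khz_def Khh_def by (intro sum.cong refl) (simp add: algebra_simps)
    finally show ?thesis unfolding Qf_lin4 qzz_def qzh_def qhz_def qhh_def by simp
  qed
  have qD_nn: "0 \<le> qD k" for k unfolding qD_eq using psdB[of k] n by simp
  have qzz_nn: "0 \<le> qzz k" for k
    unfolding qzz_def Qf_def Kzz_def using psd[rule_format, of n Z "c k"] ZZ by auto
  have uu: "(\<Sum>i<n. c k i * u i l) = (if k = l then 1 else 0)" if "k < n" "l < n" for k l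
    using uo that unfolding orth_def c_def by auto
  have bk: "b k = (1 / real n) * qzz k" if "k < n" for k
  proof -
    have "(\<Sum>i<n. \<Sum>j<n. c k i * Hm i j * c k j) = (\<Sum>l<n. b l * (\<Sum>i<n. c k i * u i l)^2)"
      by (rule quad_spec[OF spH])
    also have "\<dots> = (\<Sum>l<n. b l * (if k = l then 1 else 0))"
      using uu[OF that] by (intro sum.cong refl) auto
    also have "\<dots> = b k" using that by simp
    finally have "b k = (\<Sum>i<n. \<Sum>j<n. c k i * Hm i j * c k j)" by simp
    also have "\<dots> = (1 / real n) * qzz k"
      unfolding qzz_def Qf_def Hm_def by (simp add: sum_distrib_left algebra_simps)
    finally show ?thesis .
  qed
  have b_nn: "0 \<le> b k" if "k < n" for k using bk[OF that] qzz_nn[of k] by simp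
  define s where "s j k = (\<Sum>i<n. w i j * u i k)" for j k
  have so: "orth n s"
  proof -
    have "orth n (\<lambda>j k. \<Sum>i<n. w i j * u i k)" using orth_mult[OF orth_transpose[OF wo] uo] by simp
    thus ?thesis unfolding s_def[abs_def] .
  qed
  have srow: "(\<Sum>k<n. s j k ^ 2) = 1" if "j < n" for j
    using so that unfolding orth_def by (simp add: power2_eq_square)
  have scol: "(\<Sum>j<n. s j k ^ 2) = 1" if "k < n" for k
    using so that unfolding orth_def by (simp add: power2_eq_square)
  define qG where "qG k = (\<Sum>j<n. a j * s j k ^ 2)" for k
  have qG_eq: "qG k = (1 / real n) * qhh k" for k
  proof -
    have "(\<Sum>i<n. \<Sum>j<n. c k i * Gm i j * c k j) = (\<Sum>l<n. a l * (\<Sum>i<n. c k i * w i l)^2)"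
      by (rule quad_spec[OF spG])
    also have "\<dots> = qG k" unfolding qG_def s_def c_def by (simp add: mult.commute)
    finally have "qG k = (\<Sum>i<n. \<Sum>j<n. c k i * Gm i j * c k j)" by simp
    also have "\<dots> = (1 / real n) * qhh k"
      unfolding qhh_def Qf_def Gm_def by (simp add: sum_distrib_left algebra_simps)
    finally show ?thesis .
  qed
  have qG_le: "qG k \<le> 2 * b k + 2 * qD k" if "k < n" for k
  proof -
    have "qhh k \<le> 2 * qzz k + 2 * (qzz k - qzh k - qhz k + qhh k)" using psdA[of k] by simp
    hence "(1 / real n) * qhh k \<le> (1 / real n) * (2 * qzz k + 2 * (qzz k - qzh k - qhz k + qhh k))"
      by (rule mult_left_mono) simp
    thus ?thesis unfolding qG_eq bk[OF that] qD_eq by (simp add: algebra_simps)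
  qed
  define T where "T k \<longleftrightarrow> \<delta> \<le> b k" for k
  have step1: "Sa \<le> (\<Sum>j<n. \<delta> * (\<Sum>k<n. if T k then s j k ^ 2 else 0) + a j * (\<Sum>k<n. if T k then 0 else s j k ^ 2))"
    unfolding Sa_def
  proof (rule sum_mono)
    fix j assume "j \<in> {..<n}"
    hence j: "j < n" by simp
    have "(\<Sum>k<n. if T k then s j k ^ 2 else 0) + (\<Sum>k<n. if T k then 0 else s j k ^ 2) = (\<Sum>k<n. s j k ^ 2)"
      by (simp add: sum.distrib[symmetric] if_distrib cong: if_cong)
    hence "(\<Sum>k<n. if T k then s j k ^ 2 else 0) + (\<Sum>k<n. if T k then 0 else s j k ^ 2) = 1"
      using srow[OF j] by simp
    thus "min \<delta> (a j) \<le> \<delta> * (\<Sum>k<n. if T k then s j k ^ 2 else 0) + a j * (\<Sum>k<n. if T k then 0 else s j k ^ 2)"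
      by (intro min_comb) (auto intro: sum_nonneg)
  qed
  have step2: "(\<Sum>j<n. \<delta> * (\<Sum>k<n. if T k then s j k ^ 2 else 0) + a j * (\<Sum>k<n. if T k then 0 else s j k ^ 2))
      = (\<Sum>k<n. if T k then \<delta> else qG k)"
  proof -
    have "(\<Sum>j<n. \<delta> * (\<Sum>k<n. if T k then s j k ^ 2 else 0) + a j * (\<Sum>k<n. if T k then 0 else s j k ^ 2))
        = (\<Sum>j<n. \<Sum>k<n. (if T k then \<delta> * s j k ^ 2 else a j * s j k ^ 2))"
      by (intro sum.cong refl) (simp add: sum_distrib_left sum.distrib[symmetric] if_distrib cong: if_cong)
    also have "\<dots> = (\<Sum>k<n. \<Sum>j<n. (if T k then \<delta> * s j k ^ 2 else a j * s j k ^ 2))"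
      by (rule sum.swap)
    also have "\<dots> = (\<Sum>k<n. if T k then \<delta> else qG k)"
    proof (intro sum.cong refl)
      fix k assume "k \<in> {..<n}"
      hence k: "k < n" by simp
      show "(\<Sum>j<n. (if T k then \<delta> * s j k ^ 2 else a j * s j k ^ 2)) = (if T k then \<delta> else qG k)"
        using scol[OF k] by (cases "T k") (simp_all add: qG_def sum_distrib_left[symmetric])
    qed
    finally show ?thesis .
  qed
  have step3: "(\<Sum>k<n. if T k then \<delta> else qG k) \<le> (\<Sum>k<n. 2 * min \<delta> (b k) + 2 * qD k)"
  proof (rule sum_mono)
    fix k assume "k \<in> {..<n}"
    hence k: "k < n" by simp
    show "(if T k then \<delta> else qG k) \<le> 2 * min \<delta> (b k) + 2 * qD k"
      using qG_le[OF k] qD_nn[of k] \<delta> unfolding T_def by (auto simp: min_def)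
  qed
  have sumqD: "(\<Sum>k<n. qD k) = Delta_bar n K Z Zh"
  proof -
    have "(\<Sum>k<n. Qf n (c k) D) = (\<Sum>k<n. \<Sum>i<n. \<Sum>j<n. D i j * (u i k * u j k))"
      unfolding Qf_def c_def by (simp add: mult_ac)
    also have "\<dots> = (\<Sum>i<n. \<Sum>j<n. \<Sum>k<n. D i j * (u i k * u j k))" by (rule sum_swap3)
    also have "\<dots> = (\<Sum>i<n. \<Sum>j<n. D i j * (if i = j then 1 else 0))"
      using uo unfolding orth_def by (simp add: sum_distrib_left[symmetric])
    also have "\<dots> = (\<Sum>i<n. D i i)" by simp
    also have "\<dots> = (\<Sum>i<n. kdist_sq K (Z i) (Zh i))"
      using symK ZZ unfolding D_def kdist_sq_def Kzz_def Kzh_def Khz_def Khh_def by (intro sum.cong refl) auto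
    finally show ?thesis unfolding qD_def Delta_bar_def by (simp add: sum_divide_distrib[symmetric])
  qed
  have Sa_le: "Sa \<le> 2 * Sb + 2 * Delta_bar n K Z Zh"
  proof -
    have "Sa \<le> (\<Sum>k<n. 2 * min \<delta> (b k) + 2 * qD k)" using step1 step2 step3 by linarith
    also have "\<dots> = 2 * Sb + 2 * Delta_bar n K Z Zh"
      unfolding Sb_def sumqD[symmetric] by (simp add: sum.distrib sum_distrib_left)
    finally show ?thesis .
  qed
  have Sb_nn: "0 \<le> Sb" unfolding Sb_def using b_nn \<delta> by (intro sum_nonneg) simp
  have Db_nn: "0 \<le> Delta_bar n K Z Zh" unfolding sumqD[symmetric] using qD_nn by (intro sum_nonneg) simp
  have "sqrt (1 / real n * Sa) \<le> sqrt (4 * (1 / real n * Sb) + 4 * (Delta_bar n K Z Zh / real n))"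
    using Sa_le n Sb_nn Db_nn by (intro real_sqrt_le_mono) (auto simp: field_simps)
  also have "\<dots> \<le> sqrt (4 * (1 / real n * Sb)) + sqrt (4 * (Delta_bar n K Z Zh / real n))"
    by (rule sqrt_add_le_add_sqrt) (use Sb_nn Db_nn n in auto)
  also have "\<dots> = 2 * sqrt (1 / real n * Sb) + 2 * sqrt (Delta_bar n K Z Zh / real n)"
    using real_sqrt_unique[of 2 4] by (simp only: real_sqrt_mult) simp
  finally show ?thesis unfolding RZ RZh .
qed

theorem lemma11:
  shows "\<exists>C>0. \<forall>(r::nat) (Zs::(nat \<Rightarrow> real) set) (K::(nat \<Rightarrow> real) \<Rightarrow> (nat \<Rightarrow> real) \<Rightarrow> real)
            (\<kappa>::real) (n::nat) (Z::nat \<Rightarrow> nat \<Rightarrow> real) (Zh::nat \<Rightarrow> nat \<Rightarrow> real) (\<delta>::real).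
     (\<forall>z\<in>Zs. in_Rr r z) \<longrightarrow> kernel_A2 Zs K \<kappa> \<longrightarrow> 0 < n \<longrightarrow>
     (\<forall>i<n. Z i \<in> Zs \<and> Zh i \<in> Zs) \<longrightarrow> 0 < \<delta> \<longrightarrow>
     20 * Delta_bar n K Z Zh \<le> \<delta> \<longrightarrow>
     Rhat n K Zh \<delta> \<le> C * Rhat n K Z \<delta> + C * sqrt (Delta_bar n K Z Zh / real n)"
proof (rule exI[of _ 2], intro conjI allI impI)
  show "(0::real) < 2" by simp
next
  fix r :: nat and Zs :: "(nat \<Rightarrow> real) set" and K :: "(nat \<Rightarrow> real) \<Rightarrow> (nat \<Rightarrow> real) \<Rightarrow> real"
    and \<kappa> :: real and n :: nat and Z Zh :: "nat \<Rightarrow> nat \<Rightarrow> real" and \<delta> :: real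
  assume "\<forall>z\<in>Zs. in_Rr r z" and A2: "kernel_A2 Zs K \<kappa>" and n: "0 < n"
    and ZZ: "\<forall>i<n. Z i \<in> Zs \<and> Zh i \<in> Zs" and d: "0 < \<delta>" and "20 * Delta_bar n K Z Zh \<le> \<delta>"
  show "Rhat n K Zh \<delta> \<le> 2 * Rhat n K Z \<delta> + 2 * sqrt (Delta_bar n K Z Zh / real n)"
    by (rule main_bound[OF A2 n ZZ d])
qed

end
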